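(* A set of permutations $\{\pi_1,\dots,\pi_n\}\subseteq S_n$ such that $\mathrm{Des}(\pi_i)=\{i-1,i\}\cap[n-1]$ for all $i\in[n]$, or such that $\mathrm{Des}(\pi_i)=[n-1]\setminus\{i-1,i\}$ for all $i\in[n]$, is symmetric.
   Context: $\mathrm{Des}(w)=\{i\in[n-1]: w(i)>w(i+1)\}$. $F_{n,D}=\sum x_{i_1}\cdots x_{i_n}$ over $i_1\le\cdots\le i_n$ with $i_j<i_{j+1}$ whenever $j\in D$. A set $S\subseteq S_n$ is symmetric if $\sum_{w\in S}F_{n,\mathrm{Des}(w)}$ is a symmetric function. *)

theory Defs
  imports "HOL-Combinatorics.Permutations"
begin

definition Des :: "nat \<Rightarrow> (nat \<Rightarrow> nat) \<Rightarrow> nat set" where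
  "Des n w = {i \<in> {1..n-1}. w (Suc i) < w i}"

text \<open>Coefficient of the monomial prod_k x_k^(alpha k) in the fundamental quasisymmetric
  function F_{n,D} = sum of x_{i_1}...x_{i_n} over i_1 <= ... <= i_n with i_j < i_{j+1} for j in D.
  An index sequence (i_1,...,i_n) is the list s (0-based: s!(j-1) = i_j); variables are
  indexed by natural numbers.\<close>
definition F_coeff :: "nat \<Rightarrow> nat set \<Rightarrow> (nat \<Rightarrow> nat) \<Rightarrow> nat" where
  "F_coeff n D \<alpha> = card {s :: nat list. length s = n \<and>
      (\<forall>j \<in> {1..<n}. s ! (j - 1) \<le> s ! j \<and> (j \<in> D \<longrightarrow> s ! (j - 1) < s ! j)) \<and>
      (\<forall>k. card {j. j < n \<and> s ! j = k} = \<alpha> k)}"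

definition sumF_coeff :: "nat \<Rightarrow> (nat \<Rightarrow> nat) set \<Rightarrow> (nat \<Rightarrow> nat) \<Rightarrow> nat" where
  "sumF_coeff n S \<alpha> = (\<Sum>w\<in>S. F_coeff n (Des n w) \<alpha>)"

definition symmetric_set :: "nat \<Rightarrow> (nat \<Rightarrow> nat) set \<Rightarrow> bool" where
  "symmetric_set n S \<longleftrightarrow>
     (\<forall>\<sigma> :: nat \<Rightarrow> nat. \<forall>\<alpha>. bij \<sigma> \<longrightarrow> sumF_coeff n S (\<alpha> \<circ> \<sigma>) = sumF_coeff n S \<alpha>)"

end

theory Submission
  imports Defs "HOL-Library.Multiset"
begin

definition E :: "nat list \<Rightarrow> nat set" where
  "E s = {j. 1 \<le> j \<and> j < length s \<and> s ! (j - 1) = s ! j}"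

lemma case1_count: assumes so: "sorted s" and len: "length s = n"
  shows "card {i \<in> {1..n}. {i - 1, i} \<inter> E s = {}} = card {k. card {j. j < n \<and> s ! j = k} = 1}"
proof -
  have mono: "s ! a \<le> s ! b" if "a \<le> b" "b < n" for a b using sorted_nth_mono[OF so] that len by auto
  have single: "{j. j < n \<and> s ! j = s ! (i - 1)} = {i - 1}"
    if i: "i \<in> {1..n}" "{i - 1, i} \<inter> E s = {}" for i
  proof -
    have "j = i - 1" if j: "j < n" "s ! j = s ! (i - 1)" for j
    proof (rule ccontr)
      assume "j \<noteq> i - 1"
      then consider "j < i - 1" | "j > i - 1" by linarith
      then show False
      proof cases
        case 1
        have i1: "1 \<le> i - 1" "i - 1 < n" using 1 i by auto
        have "i - 1 \<notin> E s" using i by blast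
        then have ne: "s ! (i - 1 - 1) \<noteq> s ! (i - 1)" using i1 len by (simp add: E_def)
        have a1: "s ! (i - 1 - 1) \<le> s ! (i - 1)" by (rule mono) (use i1 in auto)
        have a2: "s ! j \<le> s ! (i - 1 - 1)" by (rule mono) (use 1 i1 in auto)
        show False using ne a1 a2 j(2) by linarith
      next
        case 2
        have i2: "i < n" "1 \<le> i" using 2 j i by auto
        have "i \<notin> E s" using i by blast
        then have ne: "s ! (i - 1) \<noteq> s ! i" using i2 len by (simp add: E_def)
        have a1: "s ! (i - 1) \<le> s ! i" by (rule mono) (use i2 in auto)
        have a2: "s ! i \<le> s ! j" by (rule mono) (use 2 j in auto)
        show False using ne a1 a2 j(2) by linarith
      qed
    qed
    then show ?thesis using i by auto
  qed
  have "bij_betw (\<lambda>i. s ! (i - 1)) {i \<in> {1..n}. {i - 1, i} \<inter> E s = {}}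
          {k. card {j. j < n \<and> s ! j = k} = 1}"
  proof (rule bij_betwI')
    fix x y assume x: "x \<in> {i \<in> {1..n}. {i - 1, i} \<inter> E s = {}}" and y: "y \<in> {i \<in> {1..n}. {i - 1, i} \<inter> E s = {}}"
    have x1: "1 \<le> x" "x \<le> n" using x by simp_all
    have y1: "1 \<le> y" "y \<le> n" using y by simp_all
    have sx: "{j. j < n \<and> s ! j = s ! (x - 1)} = {x - 1}" using single x by blast
    show "(s ! (x - 1) = s ! (y - 1)) = (x = y)"
    proof
      assume eq: "s ! (x - 1) = s ! (y - 1)"
      have "y - 1 \<in> {j. j < n \<and> s ! j = s ! (x - 1)}" using y1 eq by simp
      then have "y - 1 = x - 1" using sx by blast
      then show "x = y" using x1 y1 by linarith
    qed simp
  next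
    fix x assume x: "x \<in> {i \<in> {1..n}. {i - 1, i} \<inter> E s = {}}"
    have sx: "{j. j < n \<and> s ! j = s ! (x - 1)} = {x - 1}" using single x by blast
    then show "s ! (x - 1) \<in> {k. card {j. j < n \<and> s ! j = k} = 1}" by simp
  next
    fix k assume "k \<in> {k. card {j. j < n \<and> s ! j = k} = 1}"
    then have "card {j. j < n \<and> s ! j = k} = 1" by simp
    then obtain j0 where j0: "{j. j < n \<and> s ! j = k} = {j0}" by (rule card_1_singletonE)
    have "j0 \<in> {j. j < n \<and> s ! j = k}" using j0 by simp
    then have j0n: "j0 < n" "s ! j0 = k" by simp_all
    have "j0 \<notin> E s"
    proof
      assume a: "j0 \<in> E s"
      then have "1 \<le> j0" "s ! (j0 - 1) = s ! j0" by (simp_all add: E_def)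
      then have "j0 - 1 \<in> {j. j < n \<and> s ! j = k}" using j0n by simp
      then have "j0 - 1 = j0" unfolding j0 by simp
      then show False using \<open>1 \<le> j0\<close> by linarith
    qed
    moreover have "Suc j0 \<notin> E s"
    proof
      assume "Suc j0 \<in> E s"
      then have "Suc j0 < n" "s ! j0 = s ! Suc j0" by (simp_all add: E_def len)
      then have "Suc j0 \<in> {j. j < n \<and> s ! j = k}" using j0n by simp
      then have "Suc j0 = j0" unfolding j0 by simp
      then show False by simp
    qed
    ultimately have "{Suc j0 - 1, Suc j0} \<inter> E s = {}" by simp
    then have m: "Suc j0 \<in> {i \<in> {1..n}. {i - 1, i} \<inter> E s = {}}" using j0n by simp
    show "\<exists>x\<in>{i \<in> {1..n}. {i - 1, i} \<inter> E s = {}}. k = s ! (x - 1)"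
      by (rule bexI[OF _ m]) (simp add: j0n)
  qed
  then show ?thesis by (rule bij_betw_same_card)
qed

lemma count_list_filter: "count_list xs x = length (filter (\<lambda>y. y = x) xs)"
  by (induct xs) auto

lemma cnt_mset: "card {j. j < length xs \<and> xs ! j = k} = count (mset xs) k"
  by (simp add: count_mset count_list_filter length_filter_conv_card)

definition L :: "nat \<Rightarrow> (nat \<Rightarrow> nat) \<Rightarrow> nat list set" where
  "L n \<alpha> = {s. length s = n \<and> sorted s \<and> (\<forall>k. card {j. j < n \<and> s ! j = k} = \<alpha> k)}"

lemma L_unique: assumes "s \<in> L n \<alpha>" "t \<in> L n \<alpha>" shows "s = t"
proof -
  have "mset s = mset t" using assms
    by (auto simp: L_def multiset_eq_iff cnt_mset[symmetric])
  then have "sort s = t" using assms by (intro properties_for_sort) (auto simp: L_def)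
  then show ?thesis using assms by (simp add: L_def sorted_sort_id)
qed

lemma L_cases: "L n \<alpha> = {} \<or> (\<exists>s. L n \<alpha> = {s})"
  using L_unique by blast

lemma L_perm: assumes "bij \<sigma>" "s \<in> L n \<alpha>" shows "sort (map (inv \<sigma>) s) \<in> L n (\<alpha> \<circ> \<sigma>)"
proof -
  let ?t = "sort (map (inv \<sigma>) s)"
  have len: "length ?t = n" using assms by (simp add: L_def)
  have "count (mset ?t) k = \<alpha> (\<sigma> k)" for k
  proof -
    have "count (mset ?t) k = count (mset (map (inv \<sigma>) s)) k" by simp
    also have "\<dots> = card {j. j < length (map (inv \<sigma>) s) \<and> map (inv \<sigma>) s ! j = k}"
      by (rule cnt_mset[symmetric])
    also have "\<dots> = card {j. j < n \<and> inv \<sigma> (s ! j) = k}"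
      using assms(2) by (intro arg_cong[where f=card]) (auto simp: L_def)
    also have "{j. j < n \<and> inv \<sigma> (s ! j) = k} = {j. j < n \<and> s ! j = \<sigma> k}"
      using assms(1) by (auto simp: bij_inv_eq_iff bij_is_inj bij_is_surj surj_f_inv_f)
    also have "card \<dots> = \<alpha> (\<sigma> k)" using assms(2) by (simp add: L_def)
    finally show ?thesis .
  qed
  then show ?thesis using len by (simp add: L_def cnt_mset[of ?t, simplified len])
qed

lemma L_empty_iff: assumes "bij \<sigma>" shows "L n (\<alpha> \<circ> \<sigma>) = {} \<longleftrightarrow> L n \<alpha> = {}"
proof
  assume "L n \<alpha> = {}"
  show "L n (\<alpha> \<circ> \<sigma>) = {}"
  proof (rule ccontr)
    assume "L n (\<alpha> \<circ> \<sigma>) \<noteq> {}"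
    then obtain t where t: "t \<in> L n (\<alpha> \<circ> \<sigma>)" by blast
    have "bij (inv \<sigma>)" using assms by (simp add: bij_imp_bij_inv)
    from L_perm[OF this t] have "sort (map (inv (inv \<sigma>)) t) \<in> L n (\<alpha> \<circ> \<sigma> \<circ> inv \<sigma>)" .
    moreover have "\<alpha> \<circ> \<sigma> \<circ> inv \<sigma> = \<alpha>" using assms
      by (auto simp: fun_eq_iff bij_is_surj surj_f_inv_f)
    ultimately show False using \<open>L n \<alpha> = {}\<close> by simp
  qed
next
  assume "L n (\<alpha> \<circ> \<sigma>) = {}"
  then show "L n \<alpha> = {}" using L_perm[OF assms] by blast
qed

lemma card_set_L: assumes "s \<in> L n \<alpha>" shows "card (set s) = card {k. 0 < \<alpha> k}"
proof -
  have "set s = {k. 0 < \<alpha> k}"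
  proof -
    have "k \<in> set s \<longleftrightarrow> 0 < card {j. j < n \<and> s ! j = k}" for k
    proof -
      have fin: "finite {j. j < n \<and> s ! j = k}" by simp
      have "k \<in> set s \<longleftrightarrow> {j. j < n \<and> s ! j = k} \<noteq> {}"
        using assms by (auto simp: L_def in_set_conv_nth)
      then show ?thesis using fin by (simp add: card_gt_0_iff)
    qed
    then show ?thesis using assms by (auto simp: L_def)
  qed
  then show ?thesis by simp
qed

lemma F_coeff_L: assumes "D \<subseteq> {1..<n}"
  shows "F_coeff n D \<alpha> = card {s \<in> L n \<alpha>. D \<inter> E s = {}}"
proof -
  have "{s :: nat list. length s = n \<and>
      (\<forall>j \<in> {1..<n}. s ! (j - 1) \<le> s ! j \<and> (j \<in> D \<longrightarrow> s ! (j - 1) < s ! j)) \<and>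
      (\<forall>k. card {j. j < n \<and> s ! j = k} = \<alpha> k)} = {s \<in> L n \<alpha>. D \<inter> E s = {}}"
  proof (intro set_eqI iffI)
    fix s assume s: "s \<in> {s :: nat list. length s = n \<and>
      (\<forall>j \<in> {1..<n}. s ! (j - 1) \<le> s ! j \<and> (j \<in> D \<longrightarrow> s ! (j - 1) < s ! j)) \<and>
      (\<forall>k. card {j. j < n \<and> s ! j = k} = \<alpha> k)}"
    have "sorted s" unfolding sorted_iff_nth_Suc
    proof (intro allI impI)
      fix i assume "Suc i < length s"
      then show "s ! i \<le> s ! Suc i" using s[simplified] by (metis One_nat_def atLeastLessThan_iff diff_Suc_1 le_add1 plus_1_eq_Suc)
    qed
    then show "s \<in> {s \<in> L n \<alpha>. D \<inter> E s = {}}" using s by (auto simp: L_def E_def)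
  next
    fix s assume s: "s \<in> {s \<in> L n \<alpha>. D \<inter> E s = {}}"
    then have so: "sorted s" and len: "length s = n" by (auto simp: L_def)
    have "\<forall>j \<in> {1..<n}. s ! (j - 1) \<le> s ! j \<and> (j \<in> D \<longrightarrow> s ! (j - 1) < s ! j)"
    proof
      fix j assume j: "j \<in> {1..<n}"
      have le: "s ! (j - 1) \<le> s ! j" using sorted_nth_mono[OF so, of "j-1" j] j len by auto
      moreover have "j \<in> D \<longrightarrow> s ! (j - 1) \<noteq> s ! j" using s j len by (auto simp: E_def)
      ultimately show "s ! (j - 1) \<le> s ! j \<and> (j \<in> D \<longrightarrow> s ! (j - 1) < s ! j)" by auto
    qed
    then show "s \<in> {s :: nat list. length s = n \<and>
      (\<forall>j \<in> {1..<n}. s ! (j - 1) \<le> s ! j \<and> (j \<in> D \<longrightarrow> s ! (j - 1) < s ! j)) \<and>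
      (\<forall>k. card {j. j < n \<and> s ! j = k} = \<alpha> k)}" using s by (auto simp: L_def)
  qed
  then show ?thesis by (simp add: F_coeff_def)
qed

lemma Des_sub: "Des n w \<subseteq> {1..<n}"
  by (auto simp: Des_def)

lemma single_filter: "{x \<in> {s}. P x} = (if P s then {s} else {})"
  by auto

lemma sumF_L: assumes "finite S" "L n \<alpha> = {s}"
  shows "sumF_coeff n S \<alpha> = card {w \<in> S. Des n w \<inter> E s = {}}"
proof -
  have "sumF_coeff n S \<alpha> = (\<Sum>w\<in>S. if Des n w \<inter> E s = {} then 1 else 0)"
    unfolding sumF_coeff_def using assms(2)
    by (intro sum.cong refl) (simp only: F_coeff_L[OF Des_sub] single_filter, simp)
  also have "\<dots> = card {w \<in> S. Des n w \<inter> E s = {}}"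
    using assms(1) by (simp add: sum.If_cases Int_def)
  finally show ?thesis .
qed

lemma sumF_empty: assumes "L n \<alpha> = {}" shows "sumF_coeff n S \<alpha> = 0"
  unfolding sumF_coeff_def using assms by (simp add: F_coeff_L[OF Des_sub])

lemma key:
  assumes fin: "finite S"
    and G: "\<And>\<alpha> s. s \<in> L n \<alpha> \<Longrightarrow> card {w \<in> S. Des n w \<inter> E s = {}} = G \<alpha>"
    and inv: "\<And>\<alpha> \<sigma>. bij \<sigma> \<Longrightarrow> G (\<alpha> \<circ> \<sigma>) = G \<alpha>"
  shows "symmetric_set n S"
  unfolding symmetric_set_def
proof (intro allI impI)
  fix \<sigma> \<alpha> :: "nat \<Rightarrow> nat" assume b: "bij \<sigma>"
  show "sumF_coeff n S (\<alpha> \<circ> \<sigma>) = sumF_coeff n S \<alpha>"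
  proof (cases "L n \<alpha> = {}")
    case True
    then show ?thesis using L_empty_iff[OF b] sumF_empty by metis
  next
    case False
    then obtain s where s: "L n \<alpha> = {s}" using L_cases by blast
    from False L_empty_iff[OF b] obtain t where t: "L n (\<alpha> \<circ> \<sigma>) = {t}" using L_cases by metis
    show ?thesis using sumF_L[OF fin s] sumF_L[OF fin t] G[of s \<alpha>] G[of t "\<alpha> \<circ> \<sigma>"] s t inv[OF b]
      by simp
  qed
qed
lemma card_E: assumes so: "sorted s" and len: "length s = n" and n: "1 \<le> n"
  shows "card (E s) + card (set s) = n"
proof -
  define A where "A = {j. 1 \<le> j \<and> j < n \<and> s ! (j - 1) \<noteq> s ! j}"
  have "E s \<union> A = {1..<n}" "E s \<inter> A = {}" using len by (auto simp: E_def A_def)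
  then have c1: "card (E s) + card A = n - 1"
    by (metis card_Un_disjoint card_atLeastLessThan finite_Un finite_atLeastLessThan)
  have inj: "inj_on (\<lambda>j. s ! j) (insert 0 A)"
  proof -
    have lt: "s ! j < s ! j'" if "j \<in> insert 0 A" "j' \<in> insert 0 A" "j < j'" for j j'
    proof -
      have j': "j' \<in> A" using that by auto
      have "s ! j \<le> s ! (j' - 1)" using that j' by (intro sorted_nth_mono[OF so]) (auto simp: A_def len)
      also have "\<dots> < s ! j'" using j' sorted_nth_mono[OF so, of "j'-1" j'] by (auto simp: A_def len)
      finally show ?thesis .
    qed
    show ?thesis unfolding inj_on_def
      by (metis lt less_irrefl linorder_neqE_nat)
  qed
  have surj: "\<forall>j<n. \<exists>j0\<in>insert 0 A. s ! j0 = s ! j"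
  proof (intro allI impI)
    fix j assume "j < n" then show "\<exists>j0\<in>insert 0 A. s ! j0 = s ! j"
    proof (induct j)
      case 0 then show ?case by auto
    next
      case (Suc j)
      show ?case
      proof (cases "s ! j = s ! Suc j")
        case True then show ?thesis using Suc by auto
      next
        case False then have "Suc j \<in> A" using Suc by (auto simp: A_def)
        then show ?thesis by blast
      qed
    qed
  qed
  have A_sub: "insert 0 A \<subseteq> {..<n}" using n by (auto simp: A_def)
  have "set s = (\<lambda>j. s ! j) ` insert 0 A"
  proof
    show "set s \<subseteq> (\<lambda>j. s ! j) ` insert 0 A"
      using surj len by (auto simp: in_set_conv_nth) (metis imageI)
    show "(\<lambda>j. s ! j) ` insert 0 A \<subseteq> set s" using A_sub len by auto
  qed
  then have "card (set s) = card (insert 0 A)" using card_image[OF inj] by simp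
  also have "\<dots> = card A + 1" using A_sub by (simp add: A_def finite_subset)
  finally show ?thesis using c1 n by simp
qed

lemma case2_count: assumes so: "sorted s" and len: "length s = n"
  shows "card {i \<in> {1..n}. E s \<subseteq> {i - 1, i}} =
    (if card (E s) = 0 then n else if card (E s) = 1 then 2
     else if card (E s) = 2 \<and> (\<exists>k. 3 \<le> card {j. j < n \<and> s ! j = k}) then 1 else 0)"
proof -
  have Esub: "E s \<subseteq> {1..<n}" using len by (auto simp: E_def)
  have finE: "finite (E s)" using Esub finite_subset by blast
  have mono: "s ! a \<le> s ! b" if "a \<le> b" "b < n" for a b using sorted_nth_mono[OF so] that len by auto
  have adj_iff: "(\<exists>j. j \<in> E s \<and> Suc j \<in> E s) \<longleftrightarrow> (\<exists>k. 3 \<le> card {j. j < n \<and> s ! j = k})"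
  proof
    assume "\<exists>j. j \<in> E s \<and> Suc j \<in> E s"
    then obtain j where j: "j \<in> E s" "Suc j \<in> E s" by blast
    from j have j1: "1 \<le> j" "Suc j < n" "s ! (j - 1) = s ! j" "s ! j = s ! Suc j"
      by (simp_all add: E_def len)
    have sub: "{j - 1, j, Suc j} \<subseteq> {i. i < n \<and> s ! i = s ! j}" using j1 by auto
    have c3: "card {j - 1, j, Suc j} = 3" using j1(1) by (cases j) auto
    have fin: "finite {i. i < n \<and> s ! i = s ! j}" by simp
    have "3 \<le> card {i. i < n \<and> s ! i = s ! j}" using card_mono[OF fin sub] c3 by simp
    then show "\<exists>k. 3 \<le> card {j. j < n \<and> s ! j = k}" by blast
  next
    assume "\<exists>k. 3 \<le> card {j. j < n \<and> s ! j = k}"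
    then obtain k where k: "3 \<le> card {j. j < n \<and> s ! j = k}" by blast
    define X where "X = {j. j < n \<and> s ! j = k}"
    have fX: "finite X" by (simp add: X_def)
    have kX: "3 \<le> card X" using k by (simp add: X_def)
    have ne: "X \<noteq> {}" using kX by (metis card.empty not_numeral_le_zero)
    define a where "a = Min X"
    have aX: "a \<in> X" using fX ne unfolding a_def by (rule Min_in)
    have amin: "a \<le> x" if "x \<in> X" for x unfolding a_def using fX that by (rule Min_le)
    have "\<not> X \<subseteq> {a, Suc a}"
    proof
      assume "X \<subseteq> {a, Suc a}"
      then have "card X \<le> card {a, Suc a}" by (intro card_mono) auto
      also have "\<dots> \<le> 2" by (simp add: card_insert_le_m1)
      finally show False using kX by simp
    qed
    then obtain c where c: "c \<in> X" "c \<noteq> a" "c \<noteq> Suc a" by blast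
    have ca: "Suc (Suc a) \<le> c" using amin[OF c(1)] c(2,3) by linarith
    have cX: "c < n" "s ! c = k" using c(1) by (simp_all add: X_def)
    have aX2: "a < n" "s ! a = k" using aX by (simp_all add: X_def)
    have m1: "s ! a \<le> s ! Suc a" by (rule mono) (use ca cX in auto)
    have m2: "s ! Suc a \<le> s ! Suc (Suc a)" by (rule mono) (use ca cX in auto)
    have m3: "s ! Suc (Suc a) \<le> s ! c" by (rule mono) (use ca cX in auto)
    have e1: "s ! a = s ! Suc a" using m1 m2 m3 cX aX2 by linarith
    have e2: "s ! Suc a = s ! Suc (Suc a)" using m1 m2 m3 cX aX2 by linarith
    have "Suc a \<in> E s" using e1 ca cX len by (simp add: E_def)
    moreover have "Suc (Suc a) \<in> E s" using e2 ca cX len by (simp add: E_def)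
    ultimately show "\<exists>j. j \<in> E s \<and> Suc j \<in> E s" by blast
  qed
  consider "card (E s) = 0" | "card (E s) = 1" | "card (E s) = 2" | "card (E s) \<ge> 3" by linarith
  then show ?thesis
  proof cases
    case 1
    have e: "E s = {}" using 1 finE by simp
    have "{i \<in> {1..n}. E s \<subseteq> {i - 1, i}} = {1..n}" unfolding e by blast
    then have "card {i \<in> {1..n}. E s \<subseteq> {i - 1, i}} = n" by simp
    moreover have "(if card (E s) = 0 then n else if card (E s) = 1 then 2
     else if card (E s) = 2 \<and> (\<exists>k. 3 \<le> card {j. j < n \<and> s ! j = k}) then 1 else 0) = n"
      using 1 by simp
    ultimately show ?thesis by simp
  next
    case 2
    then obtain j where j: "E s = {j}" using card_1_singletonE by blast
    then have jr: "1 \<le> j" "j < n" using Esub by auto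
    have t2: "({j} \<subseteq> {i - 1, i}) \<longleftrightarrow> (i = j \<or> (i = Suc j))" for i
      using jr(1) by auto
    have "{i \<in> {1..n}. E s \<subseteq> {i - 1, i}} = {j, Suc j}"
      unfolding j t2 using jr by (auto simp: set_eq_iff)
    then show ?thesis using 2 by simp
  next
    case 3
    then obtain a b where ab: "E s = {a, b}" "a \<noteq> b" by (meson card_2_iff)
    show ?thesis
    proof (cases "\<exists>j. j \<in> E s \<and> Suc j \<in> E s")
      case True
      then obtain j where jj: "j \<in> E s" "Suc j \<in> E s" by blast
      have sub: "{j, Suc j} \<subseteq> E s" using jj by simp
      have "E s = {j, Suc j}"
        by (rule card_seteq[OF finE sub, symmetric]) (simp add: 3)
      moreover have "Suc j < n" using jj Esub by auto
      moreover have t1: "({j, Suc j} \<subseteq> {i - 1, i}) \<longleftrightarrow> i = Suc j" for i by auto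
      ultimately have "{i \<in> {1..n}. E s \<subseteq> {i - 1, i}} = {Suc j}" by (auto simp: set_eq_iff)
      then show ?thesis using 3 True adj_iff by simp
    next
      case False
      have "{i \<in> {1..n}. E s \<subseteq> {i - 1, i}} = {}"
      proof (rule ccontr)
        assume "{i \<in> {1..n}. E s \<subseteq> {i - 1, i}} \<noteq> {}"
        then obtain i where i: "i \<in> {1..n}" "E s \<subseteq> {i - 1, i}" by blast
        have "card {i - 1, i} \<le> card (E s)" using 3 by (simp add: card_insert_le_m1)
        then have "E s = {i - 1, i}" using card_seteq[OF _ i(2)] by simp
        then have "i - 1 \<in> E s \<and> Suc (i - 1) \<in> E s" using i(1) by simp
        then show False using False by blast
      qed
      then show ?thesis using 3 False adj_iff by simp
    qed
  next
    case 4
    have "{i \<in> {1..n}. E s \<subseteq> {i - 1, i}} = {}"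
    proof (rule ccontr)
      assume "{i \<in> {1..n}. E s \<subseteq> {i - 1, i}} \<noteq> {}"
      then obtain i where i: "E s \<subseteq> {i - 1, i}" by blast
      then have "card (E s) \<le> card {i - 1, i}" by (intro card_mono) auto
      also have "\<dots> \<le> 2" by (simp add: card_insert_le_m1)
      finally show False using 4 by simp
    qed
    then show ?thesis using 4 by simp
  qed
qed
lemma card_comp_bij: assumes "bij \<sigma>" shows "card {k. P (\<alpha> (\<sigma> k))} = card {k. P (\<alpha> k)}"
proof -
  have "{k. P (\<alpha> (\<sigma> k))} = \<sigma> -` {k. P (\<alpha> k)}" by auto
  moreover have "bij_betw \<sigma> (\<sigma> -` {k. P (\<alpha> k)}) {k. P (\<alpha> k)}"
  proof -
    have "inj_on \<sigma> (\<sigma> -` {k. P (\<alpha> k)})" using inj_on_subset[OF bij_is_inj[OF assms]] by blast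
    moreover have "\<sigma> ` (\<sigma> -` {k. P (\<alpha> k)}) = {k. P (\<alpha> k)}"
      by (rule surj_image_vimage_eq[OF bij_is_surj[OF assms]])
    ultimately show ?thesis by (simp add: bij_betw_def)
  qed
  ultimately show ?thesis by (simp add: bij_betw_same_card)
qed

lemma ex_comp_bij: assumes "bij \<sigma>" shows "(\<exists>k. P (\<alpha> (\<sigma> k))) \<longleftrightarrow> (\<exists>k. P (\<alpha> k))"
  using assms by (metis bij_pointE)

lemma card_image_filter: assumes "inj_on \<pi> A"
  shows "card {w \<in> \<pi> ` A. Q w} = card {i \<in> A. Q (\<pi> i)}"
proof -
  have "{w \<in> \<pi> ` A. Q w} = \<pi> ` {i \<in> A. Q (\<pi> i)}" by blast
  moreover have "inj_on \<pi> {i \<in> A. Q (\<pi> i)}" using assms by (rule inj_on_subset) blast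
  ultimately show ?thesis by (simp add: card_image)
qed

lemma E_sub: "s \<in> L n \<alpha> \<Longrightarrow> E s \<subseteq> {1..n-1}"
  by (auto simp: E_def L_def)

lemma E_empty_iff: assumes s: "s \<in> L n \<alpha>" shows "E s = {} \<longleftrightarrow> card {k. 0 < \<alpha> k} = n"
proof (cases "n = 0")
  case True
  then have "s = []" using s by (simp add: L_def)
  then show ?thesis using card_set_L[OF s] True by (simp add: E_def)
next
  case False
  have "card (E s) + card (set s) = n" using s False by (intro card_E) (auto simp: L_def)
  moreover have "finite (E s)" using E_sub[OF s] finite_subset by blast
  ultimately show ?thesis using card_set_L[OF s] by auto
qed

lemma const_full: assumes fin: "finite S" and d: "\<forall>w\<in>S. Des n w = {1..n-1}"
  shows "symmetric_set n S"
proof (rule key[where G = "\<lambda>\<alpha>. if card {k. 0 < \<alpha> k} = n then card S else 0"])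
  show "finite S" by fact
next
  fix \<alpha> s assume s: "s \<in> L n \<alpha>"
  have "{w \<in> S. Des n w \<inter> E s = {}} = (if E s = {} then S else {})"
    using d E_sub[OF s] by auto
  then show "card {w \<in> S. Des n w \<inter> E s = {}} = (if card {k. 0 < \<alpha> k} = n then card S else 0)"
    using E_empty_iff[OF s] by simp
next
  fix \<alpha> \<sigma> :: "nat \<Rightarrow> nat" assume "bij \<sigma>"
  then show "(if card {k. 0 < (\<alpha> \<circ> \<sigma>) k} = n then card S else 0) = (if card {k. 0 < \<alpha> k} = n then card S else 0)"
    using card_comp_bij[of \<sigma> "\<lambda>x. 0 < x" \<alpha>] by simp
qed

lemma const_empty: assumes fin: "finite S" and d: "\<forall>w\<in>S. Des n w = {}"
  shows "symmetric_set n S"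
proof (rule key[where G = "\<lambda>\<alpha>. card S"])
  show "finite S" by fact
next
  fix \<alpha> s assume s: "s \<in> L n \<alpha>"
  have "{w \<in> S. Des n w \<inter> E s = {}} = S" using d by auto
  then show "card {w \<in> S. Des n w \<inter> E s = {}} = card S" by simp
qed simp

lemma D1_inj: fixes n i i' :: nat assumes n: "3 \<le> n" and i: "i \<in> {1..n}" and i': "i' \<in> {1..n}"
  and eq: "{i - 1, i} \<inter> {1..n-1} = {i' - 1, i'} \<inter> {1..n-1}" and lt: "i < i'"
  shows False
proof -
  have iin: "i < n" using i' lt by auto
  have "i \<le> n - 1" using iin by arith
  then have "i \<in> {i - 1, i} \<inter> {1..n-1}" using i by auto
  then have "i \<in> {i' - 1, i'}" using eq by blast
  then have ii: "i' = Suc i" using lt by auto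
  show False
  proof (cases "i = 1")
    case True
    then have "2 \<in> {i' - 1, i'} \<inter> {1..n-1}" using ii n by auto
    then have "2 \<in> {i - 1, i}" using eq by blast
    then show False using True by auto
  next
    case False
    then have "i - 1 \<in> {i - 1, i} \<inter> {1..n-1}" using i ii i' by auto
    then have "i - 1 \<in> {i' - 1, i'}" using eq by blast
    then show False using ii False i by auto
  qed
qed

lemma D1_inj': fixes n i i' :: nat assumes n: "3 \<le> n" and i: "i \<in> {1..n}" and i': "i' \<in> {1..n}"
  and eq: "{i - 1, i} \<inter> {1..n-1} = {i' - 1, i'} \<inter> {1..n-1}"
  shows "i = i'"
proof (rule ccontr)
  assume "i \<noteq> i'"
  then consider "i < i'" | "i' < i" by linarith
  then show False
  proof cases
    case 1 then show False using D1_inj[OF n i i' eq] by blast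
  next
    case 2 then show False using D1_inj[OF n i' i eq[symmetric]] by blast
  qed
qed

theorem proposition4p15:
  fixes n :: nat and \<pi> :: "nat \<Rightarrow> nat \<Rightarrow> nat"
  assumes perm: "\<forall>i \<in> {1..n}. \<pi> i permutes {1..n}"
    and des: "(\<forall>i \<in> {1..n}. Des n (\<pi> i) = {i - 1, i} \<inter> {1..n-1}) \<or>
              (\<forall>i \<in> {1..n}. Des n (\<pi> i) = {1..n-1} - {i - 1, i})"
  shows "symmetric_set n (\<pi> ` {1..n})"
proof -
  have fin: "finite (\<pi> ` {1..n})" by simp
  consider "n = 0" | "n = 1" | "n = 2" | "3 \<le> n" by linarith
  then show ?thesis
  proof cases
    case 1
    then show ?thesis by (simp add: symmetric_set_def sumF_coeff_def)
  next
    case 2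
    have "\<forall>w\<in>\<pi> ` {1..n}. Des n w = {}"
    proof
      fix w assume "w \<in> \<pi> ` {1..n}"
      then have "w = \<pi> 1" using 2 by simp
      then show "Des n w = {}" using 2 by (simp add: Des_def)
    qed
    then show ?thesis using const_empty[OF fin] by blast
  next
    case 3
    have i12: "i \<in> {1..n} \<Longrightarrow> i = 1 \<or> i = 2" for i using 3 by auto
    from des show ?thesis
    proof
      assume d: "\<forall>i \<in> {1..n}. Des n (\<pi> i) = {i - 1, i} \<inter> {1..n-1}"
      have "\<forall>w\<in>\<pi> ` {1..n}. Des n w = {1..n-1}"
      proof
        fix w assume "w \<in> \<pi> ` {1..n}"
        then obtain i where i: "i \<in> {1..n}" "w = \<pi> i" by blast
        have "{i - 1, i} \<inter> {1..n-1} = {1..n-1}" using i12[OF i(1)] 3 by auto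
        then show "Des n w = {1..n-1}" using d i by simp
      qed
      then show ?thesis using const_full[OF fin] by blast
    next
      assume d: "\<forall>i \<in> {1..n}. Des n (\<pi> i) = {1..n-1} - {i - 1, i}"
      have "\<forall>w\<in>\<pi> ` {1..n}. Des n w = {}"
      proof
        fix w assume "w \<in> \<pi> ` {1..n}"
        then obtain i where i: "i \<in> {1..n}" "w = \<pi> i" by blast
        have "{1..n-1} - {i - 1, i} = {}" using i12[OF i(1)] 3 by auto
        then show "Des n w = {}" using d i by simp
      qed
      then show ?thesis using const_empty[OF fin] by blast
    qed
  next
    case 4
    from des show ?thesis
    proof
      assume d: "\<forall>i \<in> {1..n}. Des n (\<pi> i) = {i - 1, i} \<inter> {1..n-1}"
      have inj: "inj_on \<pi> {1..n}"
      proof (rule inj_onI)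
        fix i i' assume "i \<in> {1..n}" "i' \<in> {1..n}" "\<pi> i = \<pi> i'"
        then show "i = i'" using D1_inj'[OF 4] d by metis
      qed
      show ?thesis
      proof (rule key[where G = "\<lambda>\<alpha>. card {k. \<alpha> k = 1}"])
        show "finite (\<pi> ` {1..n})" by simp
      next
        fix \<alpha> s assume s: "s \<in> L n \<alpha>"
        have "card {w \<in> \<pi> ` {1..n}. Des n w \<inter> E s = {}} = card {i \<in> {1..n}. Des n (\<pi> i) \<inter> E s = {}}"
          by (rule card_image_filter[OF inj])
        also have "{i \<in> {1..n}. Des n (\<pi> i) \<inter> E s = {}} = {i \<in> {1..n}. {i - 1, i} \<inter> E s = {}}"
          using d E_sub[OF s] by blast
        also have "card \<dots> = card {k. card {j. j < n \<and> s ! j = k} = 1}"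
          using s by (intro case1_count) (auto simp: L_def)
        also have "\<dots> = card {k. \<alpha> k = 1}" using s by (simp add: L_def)
        finally show "card {w \<in> \<pi> ` {1..n}. Des n w \<inter> E s = {}} = card {k. \<alpha> k = 1}" .
      next
        fix \<alpha> \<sigma> :: "nat \<Rightarrow> nat" assume "bij \<sigma>"
        then show "card {k. (\<alpha> \<circ> \<sigma>) k = 1} = card {k. \<alpha> k = 1}"
          using card_comp_bij[of \<sigma> "\<lambda>x. x = 1" \<alpha>] by simp
      qed
    next
      assume d: "\<forall>i \<in> {1..n}. Des n (\<pi> i) = {1..n-1} - {i - 1, i}"
      have inj: "inj_on \<pi> {1..n}"
      proof (rule inj_onI)
        fix i i' assume ii: "i \<in> {1..n}" "i' \<in> {1..n}" "\<pi> i = \<pi> i'"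
        then have "{1..n-1} - {i - 1, i} = {1..n-1} - {i' - 1, i'}" using d by metis
        then have "{i - 1, i} \<inter> {1..n-1} = {i' - 1, i'} \<inter> {1..n-1}" by blast
        then show "i = i'" using D1_inj'[OF 4 ii(1,2)] by blast
      qed
      define G where "G = (\<lambda>\<alpha> :: nat \<Rightarrow> nat. let m = n - card {k. 0 < \<alpha> k} in
         (if m = 0 then n else if m = 1 then 2 else if m = 2 \<and> (\<exists>k. 3 \<le> \<alpha> k) then 1 else (0::nat)))"
      show ?thesis
      proof (rule key[where G = G])
        show "finite (\<pi> ` {1..n})" by simp
      next
        fix \<alpha> s assume s: "s \<in> L n \<alpha>"
        have so: "sorted s" and len: "length s = n" using s by (auto simp: L_def)
        have cE: "card (E s) = n - card {k. 0 < \<alpha> k}"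
          using card_E[OF so len] card_set_L[OF s] 4 by simp
        have ex: "(\<exists>k. 3 \<le> card {j. j < n \<and> s ! j = k}) \<longleftrightarrow> (\<exists>k. 3 \<le> \<alpha> k)"
          using s by (simp add: L_def)
        have "card {w \<in> \<pi> ` {1..n}. Des n w \<inter> E s = {}} = card {i \<in> {1..n}. Des n (\<pi> i) \<inter> E s = {}}"
          by (rule card_image_filter[OF inj])
        also have "{i \<in> {1..n}. Des n (\<pi> i) \<inter> E s = {}} = {i \<in> {1..n}. E s \<subseteq> {i - 1, i}}"
          using d E_sub[OF s] by blast
        also have "card \<dots> = G \<alpha>"
          unfolding case2_count[OF so len] G_def Let_def cE ex ..
        finally show "card {w \<in> \<pi> ` {1..n}. Des n w \<inter> E s = {}} = G \<alpha>" .
      next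
        fix \<alpha> \<sigma> :: "nat \<Rightarrow> nat" assume b: "bij \<sigma>"
        show "G (\<alpha> \<circ> \<sigma>) = G \<alpha>"
          unfolding G_def comp_def card_comp_bij[OF b, of "\<lambda>x. 0 < x" \<alpha>] ex_comp_bij[OF b, of "\<lambda>x. 3 \<le> x" \<alpha>] ..
      qed
    qed
  qed
qed

end
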